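(* Let $n=2^s m$ with $s\in\mathbb{Z}_{\ge0}$ and $m$ odd. There is a polynomial $P$ in $s+1$ variables with zero constant term, depending only on $s$, such that for every multiset $S$ of $n$ complex numbers, $M_1(T_s)=P\big(M_{1}(S),M_{2}(S),M_{4}(S),\dots,M_{2^s}(S)\big)$, where $T_0=S$ and $T_j=(T_{j-1})_\times$ for $j\in[s]$.
   Context: For a finite multiset $T=\{u_1,\dots,u_N\}$ of complex numbers (indexed with repetitions) and $p\in\mathbb{N}$, $M_p(T)=\sum_{k=1}^N u_k^p$, and $T_\times$ is the multiset $\{u_ju_k: 1\le j<k\le N\}$ (of size $\binom{N}{2}$). *)

theory Defs
  imports Complex_Main
begin

text \<open>A finite multiset T = {u_1,...,u_N} (indexed with repetitions) is represented
  by the list [u_1,...,u_N].\<close>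

definition power_sum :: "nat \<Rightarrow> complex list \<Rightarrow> complex" where
  "power_sum p T = (\<Sum>k<length T. (T ! k) ^ p)"

definition pair_prods :: "complex list \<Rightarrow> complex list" where
  "pair_prods T = [T ! j * T ! k. j \<leftarrow> [0..<length T], k \<leftarrow> [Suc j..<length T]]"

definition iter_prods :: "nat \<Rightarrow> complex list \<Rightarrow> complex list" where
  "iter_prods j S = (pair_prods ^^ j) S"

text \<open>A polynomial in the k variables x_0,...,x_{k-1} with complex coefficients is given by a
  coefficient function on exponent vectors (nat \<Rightarrow> nat) with finite support, where every
  exponent vector in the support only uses the variables 0..k-1.\<close>
definition is_poly_in :: "nat \<Rightarrow> ((nat \<Rightarrow> nat) \<Rightarrow> complex) \<Rightarrow> bool" where
  "is_poly_in k c \<longleftrightarrow> finite {\<alpha>. c \<alpha> \<noteq> 0} \<and> (\<forall>\<alpha>. c \<alpha> \<noteq> 0 \<longrightarrow> (\<forall>i\<ge>k. \<alpha> i = 0))"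

definition poly_eval :: "nat \<Rightarrow> ((nat \<Rightarrow> nat) \<Rightarrow> complex) \<Rightarrow> (nat \<Rightarrow> complex) \<Rightarrow> complex" where
  "poly_eval k c x = (\<Sum>\<alpha>\<in>{\<alpha>. c \<alpha> \<noteq> 0}. c \<alpha> * (\<Prod>i<k. x i ^ \<alpha> i))"

definition zero_const_term :: "((nat \<Rightarrow> nat) \<Rightarrow> complex) \<Rightarrow> bool" where
  "zero_const_term c \<longleftrightarrow> c (\<lambda>_. 0) = 0"

end

theory Submission
  imports Defs
begin

definition psum :: "nat \<Rightarrow> complex list \<Rightarrow> complex" where
  "psum p T = sum_list (map (\<lambda>u. u ^ p) T)"

lemma power_sum_psum: "power_sum p T = psum p T"
  unfolding power_sum_def psum_def by (simp add: sum_list_sum_nth atLeast0LessThan)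

lemma pair_prods_Nil: "pair_prods [] = []"
  by (simp add: pair_prods_def)

lemma v: "[Suc j..<Suc n] = map Suc [j..<n]" for j n
    by (rule map_Suc_upt[symmetric])
lemma u: "[0..<Suc n] = 0 # map Suc [0..<n]" for n
  by (rule upt_conv_Cons[THEN trans]) (simp_all only: v zero_less_Suc)
lemma w: "map (\<lambda>x. a * T ! x) [0..<length T] = map ((*) a) T"
  by (metis (no_types, lifting) map_eq_conv map_nth map_map comp_apply)
lemma pair_prods_Cons: "pair_prods (a # T) = map ((*) a) T @ pair_prods T"
    unfolding pair_prods_def
    apply (simp only: length_Cons u list.map concat.simps map_map)
    apply (simp only: comp_def v map_map nth_Cons_Suc nth_Cons_0)
    apply (simp only: w)
    done

lemma psum_append: "psum p (xs @ ys) = psum p xs + psum p ys"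
  by (simp add: psum_def)

lemma psum_map_mult: "psum p (map ((*) a) T) = a ^ p * psum p T"
  by (induct T) (auto simp: psum_def power_mult_distrib algebra_simps)

lemma psum_pair: "psum p (pair_prods T) = (psum p T ^ 2 - psum (2*p) T) / 2"
proof (induct T)
  case Nil then show ?case by (simp add: pair_prods_Nil psum_def)
next
  case (Cons a T)
  have "psum p (pair_prods (a#T)) = a^p * psum p T + psum p (pair_prods T)"
    by (simp add: pair_prods_Cons psum_append psum_map_mult)
  also have "\<dots> = ((a^p + psum p T)^2 - (a^(2*p) + psum (2*p) T)) / 2"
    using Cons by (simp add: field_simps power2_eq_square power_mult)
  also have "\<dots> = (psum p (a#T) ^ 2 - psum (2*p) (a#T)) / 2"
    by (simp add: psum_def)
  finally show ?case .
qed

fun G :: "nat \<Rightarrow> nat \<Rightarrow> (nat \<Rightarrow> complex) \<Rightarrow> complex" where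
  "G 0 i x = x i"
| "G (Suc j) i x = (G j i x ^ 2 - G j (Suc i) x) / 2"

lemma G_correct: "psum (2^i) (iter_prods j S) = G j i (\<lambda>i. psum (2^i) S)"
proof (induct j arbitrary: i)
  case 0 then show ?case by (simp add: iter_prods_def)
next
  case (Suc j)
  have "iter_prods (Suc j) S = pair_prods (iter_prods j S)"
    by (simp add: iter_prods_def)
  then show ?case using Suc[of i] Suc[of "Suc i"] by (simp add: psum_pair mult.commute)
qed

lemma G_zero: "G j i (\<lambda>_. 0) = 0"
  by (induct j arbitrary: i) auto

definition mon :: "nat \<Rightarrow> (nat \<Rightarrow> nat) \<Rightarrow> (nat \<Rightarrow> complex) \<Rightarrow> complex" where
  "mon k \<alpha> x = (\<Prod>i<k. x i ^ \<alpha> i)"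

definition evL :: "nat \<Rightarrow> (complex \<times> (nat \<Rightarrow> nat)) list \<Rightarrow> (nat \<Rightarrow> complex) \<Rightarrow> complex" where
  "evL k L x = sum_list (map (\<lambda>(a,\<alpha>). a * mon k \<alpha> x) L)"

definition okL :: "nat \<Rightarrow> (complex \<times> (nat \<Rightarrow> nat)) list \<Rightarrow> bool" where
  "okL k L \<longleftrightarrow> (\<forall>(a,\<alpha>)\<in>set L. \<forall>i\<ge>k. \<alpha> i = 0)"

definition mulL :: "(complex \<times> (nat \<Rightarrow> nat)) list \<Rightarrow> (complex \<times> (nat \<Rightarrow> nat)) list \<Rightarrow> (complex \<times> (nat \<Rightarrow> nat)) list" where
  "mulL L1 L2 = concat (map (\<lambda>(a,\<alpha>). map (\<lambda>(b,\<beta>). (a*b, \<lambda>t. \<alpha> t + \<beta> t)) L2) L1)"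

lemma mon_add: "mon k (\<lambda>t. \<alpha> t + \<beta> t) x = mon k \<alpha> x * mon k \<beta> x"
  by (simp add: mon_def power_add prod.distrib)

lemma evL_mul: "evL k (mulL L1 L2) x = evL k L1 x * evL k L2 x"
proof (induct L1)
  case Nil then show ?case by (simp add: evL_def mulL_def)
next
  case (Cons p L1)
  obtain a \<alpha> where p: "p = (a,\<alpha>)" by force
  have "evL k (map (\<lambda>(b,\<beta>). (a*b, \<lambda>t. \<alpha> t + \<beta> t)) L2) x = a * mon k \<alpha> x * evL k L2 x"
    by (induct L2) (auto simp: evL_def mon_add algebra_simps)
  then show ?case using Cons
    by (simp add: p mulL_def evL_def algebra_simps)
qed

lemma okL_mul: "okL k L1 \<Longrightarrow> okL k L2 \<Longrightarrow> okL k (mulL L1 L2)"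
  by (auto simp: okL_def mulL_def)

definition smulL :: "complex \<Rightarrow> (complex \<times> (nat \<Rightarrow> nat)) list \<Rightarrow> (complex \<times> (nat \<Rightarrow> nat)) list" where
  "smulL c L = map (\<lambda>(a,\<alpha>). (c*a, \<alpha>)) L"

lemma evL_smul: "evL k (smulL c L) x = c * evL k L x"
  by (induct L) (auto simp: evL_def smulL_def algebra_simps)

lemma evL_append: "evL k (L1 @ L2) x = evL k L1 x + evL k L2 x"
  by (simp add: evL_def)

lemma okL_append: "okL k (L1 @ L2) \<longleftrightarrow> okL k L1 \<and> okL k L2"
  by (auto simp: okL_def)

lemma okL_smul: "okL k L \<Longrightarrow> okL k (smulL c L)"
  by (auto simp: okL_def smulL_def)

fun GL :: "nat \<Rightarrow> nat \<Rightarrow> (complex \<times> (nat \<Rightarrow> nat)) list" where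
  "GL 0 i = [(1, (\<lambda>t. if t = i then 1 else 0))]"
| "GL (Suc j) i = smulL (1/2) (mulL (GL j i) (GL j i)) @ smulL (-1/2) (GL j (Suc i))"

lemma GL_props: "i + j < k \<Longrightarrow> okL k (GL j i) \<and> (\<forall>x. evL k (GL j i) x = G j i x)"
proof (induct j arbitrary: i)
  case 0
  have "mon k (\<lambda>t. if t = i then 1 else 0) x = x i" for x
  proof -
    have "mon k (\<lambda>t. if t = i then 1 else 0) x = (\<Prod>t<k. if t = i then x i else 1)"
      unfolding mon_def by (rule prod.cong) auto
    also have "\<dots> = x i" using 0 by (simp add: prod.delta)
    finally show ?thesis .
  qed
  then show ?case using 0 by (auto simp: okL_def evL_def)
next
  case (Suc j)
  then have a: "okL k (GL j i)" "\<And>x. evL k (GL j i) x = G j i x"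
    and b: "okL k (GL j (Suc i))" "\<And>x. evL k (GL j (Suc i)) x = G j (Suc i) x"
    by auto
  have "okL k (GL (Suc j) i)"
    using a b by (simp only: GL.simps okL_append okL_mul okL_smul)
  moreover have "evL k (GL (Suc j) i) x = G (Suc j) i x" for x
    using a b by (simp only: GL.simps G.simps evL_append evL_smul evL_mul)
      (simp add: power2_eq_square diff_divide_distrib)
  ultimately show ?case by blast
qed

definition coefL :: "(complex \<times> (nat \<Rightarrow> nat)) list \<Rightarrow> (nat \<Rightarrow> nat) \<Rightarrow> complex" where
  "coefL L \<gamma> = sum_list (map fst (filter (\<lambda>(a,\<alpha>). \<alpha> = \<gamma>) L))"

lemma coefL_supp: "{\<gamma>. coefL L \<gamma> \<noteq> 0} \<subseteq> snd ` set L"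
proof
  fix \<gamma> assume "\<gamma> \<in> {\<gamma>. coefL L \<gamma> \<noteq> 0}"
  then have "filter (\<lambda>(a,\<alpha>). \<alpha> = \<gamma>) L \<noteq> []" by (auto simp: coefL_def)
  then obtain p where "p \<in> set L" "snd p = \<gamma>"
    by (auto simp: filter_empty_conv)
  then show "\<gamma> \<in> snd ` set L" by auto
qed

lemma coefL_sum: "finite A \<Longrightarrow> snd ` set L \<subseteq> A \<Longrightarrow>
  (\<Sum>\<gamma>\<in>A. coefL L \<gamma> * mon k \<gamma> x) = evL k L x"
proof (induct L)
  case Nil then show ?case by (simp add: coefL_def evL_def)
next
  case (Cons p L)
  obtain a \<alpha> where p: "p = (a,\<alpha>)" by force
  have c: "coefL (p#L) \<gamma> = (if \<gamma> = \<alpha> then a else 0) + coefL L \<gamma>" for \<gamma>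
    by (auto simp: coefL_def p)
  have "(\<Sum>\<gamma>\<in>A. coefL (p#L) \<gamma> * mon k \<gamma> x)
      = (\<Sum>\<gamma>\<in>A. (if \<gamma> = \<alpha> then a * mon k \<gamma> x else 0)) + (\<Sum>\<gamma>\<in>A. coefL L \<gamma> * mon k \<gamma> x)"
    unfolding sum.distrib[symmetric] by (rule sum.cong) (auto simp: c distrib_right)
  also have "\<dots> = a * mon k \<alpha> x + evL k L x"
    using Cons p by (simp add: sum.delta)
  also have "\<dots> = evL k (p#L) x" by (simp add: evL_def p)
  finally show ?case .
qed

lemma coefL_poly: "okL k L \<Longrightarrow> is_poly_in k (coefL L) \<and> (\<forall>x. poly_eval k (coefL L) x = evL k L x)"
proof -
  assume ok: "okL k L"
  have fin: "finite {\<gamma>. coefL L \<gamma> \<noteq> 0}"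
    using coefL_supp by (rule finite_subset) simp
  have "\<forall>\<alpha>. coefL L \<alpha> \<noteq> 0 \<longrightarrow> (\<forall>i\<ge>k. \<alpha> i = 0)"
    using coefL_supp[of L] ok by (fastforce simp: okL_def)
  moreover have "poly_eval k (coefL L) x = evL k L x" for x
  proof -
    have "poly_eval k (coefL L) x = (\<Sum>\<gamma>\<in>snd ` set L. coefL L \<gamma> * mon k \<gamma> x)"
      unfolding poly_eval_def mon_def
      by (rule sum.mono_neutral_left) (use coefL_supp in auto)
    also have "\<dots> = evL k L x" by (rule coefL_sum) auto
    finally show ?thesis .
  qed
  ultimately show ?thesis using fin by (simp add: is_poly_in_def)
qed

lemma const_term: "is_poly_in k c \<Longrightarrow> poly_eval k c (\<lambda>_. 0) = c (\<lambda>_. 0)"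
proof -
  assume p: "is_poly_in k c"
  have m: "(\<Prod>i<k. (0::complex) ^ \<alpha> i) = (if \<alpha> = (\<lambda>_. 0) then 1 else 0)"
    if "c \<alpha> \<noteq> 0" for \<alpha>
  proof (cases "\<alpha> = (\<lambda>_. 0)")
    case True then show ?thesis by simp
  next
    case False
    then obtain i where "\<alpha> i \<noteq> 0" by auto
    moreover have "i < k" using p that \<open>\<alpha> i \<noteq> 0\<close> unfolding is_poly_in_def
      by (meson not_le)
    ultimately show ?thesis using False
      by (auto intro!: prod_zero_iff[THEN iffD2] simp: finite_lessThan)
  qed
  have "poly_eval k c (\<lambda>_. 0) = (\<Sum>\<alpha>\<in>{\<alpha>. c \<alpha> \<noteq> 0}. c \<alpha> * (if \<alpha> = (\<lambda>_. 0) then 1 else 0))"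
    unfolding poly_eval_def by (rule sum.cong) (auto simp: m)
  also have "\<dots> = c (\<lambda>_. 0)"
    using p by (simp add: is_poly_in_def if_distrib sum.delta cong: if_cong)
  finally show ?thesis .
qed

theorem lemma3p5:
  fixes s :: nat
  shows "\<exists>c. is_poly_in (Suc s) c \<and> zero_const_term c \<and>
    (\<forall>m n (S :: complex list). odd m \<longrightarrow> n = 2 ^ s * m \<longrightarrow> length S = n \<longrightarrow>
       power_sum 1 (iter_prods s S) = poly_eval (Suc s) c (\<lambda>i. power_sum (2 ^ i) S))"
proof -
  have g: "okL (Suc s) (GL s 0)" "\<And>x. evL (Suc s) (GL s 0) x = G s 0 x"
    using GL_props[of 0 s "Suc s"] by auto
  define c where "c = coefL (GL s 0)"
  have pc: "is_poly_in (Suc s) c" "\<And>x. poly_eval (Suc s) c x = G s 0 x"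
    using coefL_poly[OF g(1)] g(2) by (auto simp: c_def)
  have z: "zero_const_term c"
    unfolding zero_const_term_def using const_term[OF pc(1)] pc(2) G_zero by simp
  show ?thesis
    apply (rule exI[of _ c])
    using pc z G_correct[of 0 s] by (simp add: power_sum_psum)
qed

end
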